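(* Let $L_1,\dots,L_n\subset\mathbb{C}^2$ be $n\ge3$ distinct complex lines through the origin and let $a_1,\dots,a_n\in\mathbb{C}\setminus\{0\}$. The set of all standard connections with poles along $L_1,\dots,L_n$ and residue traces $\operatorname{tr}A_i=a_i$ is a complex affine space of dimension $n-3$.
   Context: With $\ell_i$ defining linear forms of $L_i$, a standard connection is a connection on $T\mathbb{C}^2$ (away from the lines) of the form $\nabla=d-\sum_iA_i\frac{d\ell_i}{\ell_i}$ in the frame $\partial_z,\partial_w$, where the $A_i$ are non-zero constant complex $2\times2$ matrices with $\ker A_i=L_i$ for all $i$ and $\sum_iA_i=c\cdot\mathrm{Id}$ for some $c\in\mathbb{C}$. Such a connection is determined by the tuple $(A_1,\dots,A_n)$. *)

theory Defs
  imports "HOL-Analysis.Analysis"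
begin

definition complex_line :: "(complex^2) set \<Rightarrow> bool" where
  "complex_line L \<longleftrightarrow> (\<exists>v. v \<noteq> 0 \<and> L = {c *s v | c. True})"

definition cscaleM :: "complex \<Rightarrow> complex^2^2 \<Rightarrow> complex^2^2" where
  "cscaleM t M = (\<chi> r s. t * M $ r $ s)"

text \<open>Standard connection with poles along the lines L i, given by residue tuple A:
  each A i is nonzero with kernel L i, and the sum of residues is a scalar matrix.\<close>
definition standard_connection :: "('n::finite \<Rightarrow> (complex^2) set) \<Rightarrow> ('n \<Rightarrow> complex^2^2) \<Rightarrow> bool" where
  "standard_connection L A \<longleftrightarrow>
     (\<forall>i. A i \<noteq> 0 \<and> {v. A i *v v = 0} = L i) \<and> (\<exists>c. (\<Sum>i\<in>UNIV. A i) = mat c)"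

definition complex_affine_space_dim :: "('n \<Rightarrow> complex^2^2) set \<Rightarrow> nat \<Rightarrow> bool" where
  "complex_affine_space_dim S m \<longleftrightarrow>
     (\<exists>P B. (\<forall>t. (\<forall>i. (\<Sum>k<m. cscaleM (t k) (B k i)) = 0) \<longrightarrow> (\<forall>k<m. t k = 0)) \<and>
            S = {(\<lambda>i. P i + (\<Sum>k<m. cscaleM (t k) (B k i))) | t. True})"

end

theory Submission
  imports Defs
begin

lemma vec2_eq: "(x::'a^2) = y \<longleftrightarrow> x$1 = y$1 \<and> x$2 = y$2"
  by (simp add: vec_eq_iff forall_2)
lemma mat2_eq: "(A::'a^2^2) = B \<longleftrightarrow> A$1$1 = B$1$1 \<and> A$1$2 = B$1$2 \<and> A$2$1 = B$2$1 \<and> A$2$2 = B$2$2"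
  by (simp add: vec_eq_iff forall_2)
lemma mv2: "((A::'a::semiring_1^2^2) *v x) $ r = A$r$1 * x$1 + A$r$2 * x$2"
  by (simp add: matrix_vector_mult_def sum_2)
lemma tr2: "trace (A::'a::semiring_1^2^2) = A$1$1 + A$2$2"
  by (simp add: trace_def sum_2)
lemma cscaleM_nth[simp]: "cscaleM t M $ r $ s = t * M$r$s"
  by (simp add: cscaleM_def)
lemma mat_nth: "mat c $ r $ s = (if r = s then c else 0)"
  by (simp add: mat_def)
lemma one_neq_two[simp]: "(1::2) \<noteq> 2" "(2::2) \<noteq> 1"
  by simp_all

definition Nm :: "complex^2 \<Rightarrow> complex^2^2" where
  "Nm v = (\<chi> r s. v$r * (if s = 1 then v$2 else - v$1))"

lemma Nm_nth[simp]: "Nm v $1$1 = v$1 * v$2" "Nm v $1$2 = - (v$1 * v$1)"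
   "Nm v $2$1 = v$2 * v$2" "Nm v $2$2 = - (v$2 * v$1)"
  by (simp_all add: Nm_def)

lemma prop2:
  fixes v x :: "complex^2"
  assumes "v \<noteq> 0" "v$1 * x$2 - v$2 * x$1 = 0"
  shows "\<exists>c. x = c *s v"
proof (cases "v$1 = 0")
  case True
  then have "v$2 \<noteq> 0" using assms(1) by (auto simp: vec2_eq)
  then have "x$1 = 0" using assms(2) True by simp
  show ?thesis
    by (rule exI[of _ "x$2 / v$2"]) (simp add: vec2_eq True \<open>x$1 = 0\<close> \<open>v$2 \<noteq> 0\<close>)
next
  case False
  have "x$2 = x$1 * v$2 / v$1" using assms(2) False by (simp add: field_simps)
  then show ?thesis using False
    by (intro exI[of _ "x$1 / v$1"]) (simp add: vec2_eq)
qed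

lemma param_scalar:
  fixes b11 b12 b21 b22 p q :: complex
  assumes "p \<noteq> 0 \<or> q \<noteq> 0" "b11*p + b12*q = 0" "b21*p+b22*q = 0" "b11 + b22 = 0"
  shows "\<exists>s. b11 = s*(p*q) \<and> b12 = s*(-(p*p)) \<and> b21 = s*(q*q) \<and> b22 = s*(-(q*p))"
proof (cases "p = 0")
  case True
  then have q: "q \<noteq> 0" using assms by auto
  have "b12 = 0" "b22 = 0" using assms True q by auto
  then show ?thesis using True q assms
    by (intro exI[of _ "b21/(q*q)"]) (auto simp: field_simps)
next
  case False
  have "b11*p = -(b12*q)" using assms(2) by (simp add: eq_neg_iff_add_eq_0)
  then have e1: "b11 = - b12 * q / p" using False by (simp add: field_simps)
  have e4: "b22 = b12 * q / p" using assms(4) e1 by simp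
  have "b21*p = -(b22*q)" using assms(3) by (simp add: eq_neg_iff_add_eq_0)
  then have e2: "b21 = - b22 * q / p" using False by (simp add: field_simps)
  show ?thesis using False
    by (intro exI[of _ "- b12/(p*p)"]) (simp add: e1 e2 e4 field_simps)
qed

lemma solve3:
  fixes p1 q1 p2 q2 p3 q3 y1 y2 y3 :: complex
  assumes "p1*q2 - p2*q1 \<noteq> 0" "p1*q3 - p3*q1 \<noteq> 0" "p2*q3 - p3*q2 \<noteq> 0"
  shows "\<exists>x1 x2 x3. x1*(p1*q1) + x2*(p2*q2) + x3*(p3*q3) = y1 \<and>
   x1*(p1*p1) + x2*(p2*p2) + x3*(p3*p3) = y2 \<and>
   x1*(q1*q1) + x2*(q2*q2) + x3*(q3*q3) = y3"
proof -
  define D where "D = (p1*q2 - p2*q1)*(p1*q3 - p3*q1)*(p2*q3 - p3*q2)"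
  have D: "D \<noteq> 0" using assms unfolding D_def by simp
  define z1 where "z1 = (-(p2*q3+q2*p3)*y1 + q2*q3*y2 + p2*p3*y3) * (p2*q3 - p3*q2)"
  define z2 where "z2 = ((p1*q3+q1*p3)*y1 - q1*q3*y2 - p1*p3*y3) * (p1*q3 - p3*q1)"
  define z3 where "z3 = (-(p1*q2+q1*p2)*y1 + q1*q2*y2 + p1*p2*y3) * (p1*q2 - p2*q1)"
  have h1: "z1*(p1*q1) + z2*(p2*q2) + z3*(p3*q3) = D*y1"
    unfolding z1_def z2_def z3_def D_def by algebra
  have h2: "z1*(p1*p1) + z2*(p2*p2) + z3*(p3*p3) = D*y2"
    unfolding z1_def z2_def z3_def D_def by algebra
  have h3: "z1*(q1*q1) + z2*(q2*q2) + z3*(q3*q3) = D*y3"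
    unfolding z1_def z2_def z3_def D_def by algebra
  have g: "(z1/D)*a + (z2/D)*b + (z3/D)*c = (z1*a + z2*b + z3*c)/D" for a b c
    by (simp add: add_divide_distrib)
  show ?thesis
    apply (rule exI[of _ "z1/D"], rule exI[of _ "z2/D"], rule exI[of _ "z3/D"])
    using D by (simp only: g h1 h2 h3) simp
qed

lemma solve3_uniq:
  fixes p1 q1 p2 q2 p3 q3 x1 x2 x3 :: complex
  assumes "p1*q2 - p2*q1 \<noteq> 0" "p1*q3 - p3*q1 \<noteq> 0" "p2*q3 - p3*q2 \<noteq> 0"
   "x1*(p1*q1) + x2*(p2*q2) + x3*(p3*q3) = 0"
   "x1*(p1*p1) + x2*(p2*p2) + x3*(p3*p3) = 0"
   "x1*(q1*q1) + x2*(q2*q2) + x3*(q3*q3) = 0"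
  shows "x1 = 0 \<and> x2 = 0 \<and> x3 = 0"
proof -
  define y1 where "y1 = x1*(p1*q1) + x2*(p2*q2) + x3*(p3*q3)"
  define y2 where "y2 = x1*(p1*p1) + x2*(p2*p2) + x3*(p3*p3)"
  define y3 where "y3 = x1*(q1*q1) + x2*(q2*q2) + x3*(q3*q3)"
  have a: "x1 * ((p1*q2-p2*q1)*(p1*q3-p3*q1)) = -(p2*q3+q2*p3)*y1 + q2*q3*y2 + p2*p3*y3"
    unfolding y1_def y2_def y3_def by algebra
  have b: "x2 * ((p1*q2-p2*q1)*(p2*q3-p3*q2)) = (p1*q3+q1*p3)*y1 - q1*q3*y2 - p1*p3*y3"
    unfolding y1_def y2_def y3_def by algebra
  have c: "x3 * ((p1*q3-p3*q1)*(p2*q3-p3*q2)) = -(p1*q2+q1*p2)*y1 + q1*q2*y2 + p1*p2*y3"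
    unfolding y1_def y2_def y3_def by algebra
  have "y1 = 0" "y2 = 0" "y3 = 0" using assms(4-6) y1_def y2_def y3_def by auto
  then show ?thesis using a b c assms(1-3) by simp
qed


lemma exW:
  fixes v :: "complex^2"
  assumes "v \<noteq> 0"
  shows "\<exists>W::complex^2^2. W *v v = 0 \<and> trace W = 1"
proof (cases "v$1 = 0")
  case True
  show ?thesis
    apply (rule exI[of _ "vector [vector [1,0], vector [0,0]]"])
    using True by (simp add: vec2_eq mv2 tr2 vector_2)
next
  case False
  show ?thesis
    apply (rule exI[of _ "vector [vector [0,0], vector [- v$2 / v$1, 1]]"])
    using False by (simp add: vec2_eq mv2 tr2 vector_2)
qed

lemma kernel_iff:
  fixes v :: "complex^2" and A :: "complex^2^2"
  assumes "v \<noteq> 0" "trace A \<noteq> 0" "L = {c *s v | c. True}"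
  shows "{x. A *v x = 0} = L \<longleftrightarrow> A *v v = 0"
proof
  assume "{x. A *v x = 0} = L"
  moreover have "v \<in> L" using assms(3) by (auto intro: exI[of _ 1])
  ultimately show "A *v v = 0" by auto
next
  assume Av: "A *v v = 0"
  show "{x. A *v x = 0} = L"
  proof (intro equalityI subsetI)
    fix x assume "x \<in> L"
    then obtain c where x: "x = c *s v" using assms(3) by auto
    have e: "A$r$1 * v$1 + A$r$2 * v$2 = 0" for r using Av by (simp add: vec_eq_iff mv2)
    have "A$r$1 * (c * v$1) + A$r$2 * (c* v$2) = c * (A$r$1 * v$1 + A$r$2 * v$2)" for r
      by (simp add: algebra_simps)
    then show "x \<in> {x. A *v x = 0}" using e by (simp add: x vec_eq_iff mv2)
  next
    fix x assume "x \<in> {x. A *v x = 0}"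
    then have Ax: "A *v x = 0" by simp
    have e: "A$r$1 * v$1 + A$r$2 * v$2 = 0" for r using Av by (simp add: vec_eq_iff mv2)
    have f: "A$r$1 * x$1 + A$r$2 * x$2 = 0" for r using Ax by (simp add: vec_eq_iff mv2)
    have "v$1 * x$2 - v$2 * x$1 = 0"
    proof (rule ccontr)
      assume nz: "v$1 * x$2 - v$2 * x$1 \<noteq> 0"
      have g1: "A$r$1 * (v$1 * x$2 - v$2 * x$1) = x$2 * (A$r$1 * v$1 + A$r$2 * v$2) - v$2 * (A$r$1 * x$1 + A$r$2 * x$2)" for r
        by (simp add: algebra_simps)
      have g2: "A$r$2 * (v$1 * x$2 - v$2 * x$1) = v$1 * (A$r$1 * x$1 + A$r$2 * x$2) - x$1 * (A$r$1 * v$1 + A$r$2 * v$2)" for r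
        by (simp add: algebra_simps)
      have "A$1$1 = 0" "A$2$2 = 0" using g1[of 1] g2[of 2] e f nz by simp_all
      then show False using assms(2) by (simp add: tr2)
    qed
    then obtain c where "x = c *s v" using prop2 assms(1) by blast
    then show "x \<in> L" using assms(3) by auto
  qed
qed

lemma param1:
  fixes v :: "complex^2" and A W :: "complex^2^2"
  assumes "v \<noteq> 0" "W *v v = 0" "trace W = 1"
  shows "(A *v v = 0 \<and> trace A = a) \<longleftrightarrow> (\<exists>s. A = cscaleM a W + cscaleM s (Nm v))"
proof
  have w: "W$r$1 * v$1 + W$r$2 * v$2 = 0" for r using assms(2) by (simp add: vec_eq_iff mv2)
  have t: "W$1$1 + W$2$2 = 1" using assms(3) by (simp add: tr2)
  assume h: "A *v v = 0 \<and> trace A = a"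
  have e: "A$r$1 * v$1 + A$r$2 * v$2 = 0" for r using h by (simp add: vec_eq_iff mv2)
  define b where "b r s = A$r$s - a * W$r$s" for r s
  have "b r 1 * v$1 + b r 2 * v$2 = (A$r$1 * v$1 + A$r$2 * v$2) - a * (W$r$1 * v$1 + W$r$2 * v$2)" for r
    unfolding b_def by (simp add: algebra_simps)
  then have be: "b r 1 * v$1 + b r 2 * v$2 = 0" for r using e w by simp
  have "b 1 1 + b 2 2 = (A$1$1 + A$2$2) - a * (W$1$1 + W$2$2)" unfolding b_def by (simp add: algebra_simps)
  then have bt: "b 1 1 + b 2 2 = 0" using h t by (simp add: tr2)
  have nz: "v$1 \<noteq> 0 \<or> v$2 \<noteq> 0" using assms(1) by (auto simp: vec2_eq)
  obtain s where "b 1 1 = s*(v$1* v$2) \<and> b 1 2 = s*(-(v$1* v$1)) \<and> b 2 1 = s*(v$2* v$2) \<and> b 2 2 = s*(-(v$2* v$1))"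
    using param_scalar[OF nz be[of 1] be[of 2] bt] by blast
  then show "\<exists>s. A = cscaleM a W + cscaleM s (Nm v)"
    by (intro exI[of _ s]) (auto simp: mat2_eq b_def algebra_simps)
next
  have w: "W$r$1 * v$1 + W$r$2 * v$2 = 0" for r using assms(2) by (simp add: vec_eq_iff mv2)
  have t: "W$1$1 + W$2$2 = 1" using assms(3) by (simp add: tr2)
  assume "\<exists>s. A = cscaleM a W + cscaleM s (Nm v)"
  then obtain s where A: "A = cscaleM a W + cscaleM s (Nm v)" by blast
  have "(a * W$r$1 + s * Nm v$r$1) * v$1 + (a * W$r$2 + s * Nm v$r$2) * v$2
     = a * (W$r$1 * v$1 + W$r$2 * v$2) + s * (Nm v$r$1 * v$1 + Nm v$r$2 * v$2)" for r
    by (simp add: algebra_simps)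
  moreover have "Nm v$r$1 * v$1 + Nm v$r$2 * v$2 = 0" for r
    using exhaust_2[of r] by (auto simp: algebra_simps)
  ultimately have "(a * W$r$1 + s * Nm v$r$1) * v$1 + (a * W$r$2 + s * Nm v$r$2) * v$2 = 0" for r
    using w by simp
  then have "A *v v = 0" by (simp add: A vec_eq_iff mv2)
  moreover have "trace A = a"
  proof -
    have "trace A = a * (W$1$1 + W$2$2) + s * (v$1* v$2 - v$2* v$1)" by (simp add: A tr2 algebra_simps)
    then show ?thesis using t by simp
  qed
  ultimately show "A *v v = 0 \<and> trace A = a" by simp
qed

lemma sum3:
  fixes f :: "'n::finite \<Rightarrow> 'a::comm_monoid_add"
  assumes "i1 \<noteq> i2" "i1 \<noteq> i3" "i2 \<noteq> i3" "\<And>j. j \<notin> {i1,i2,i3} \<Longrightarrow> f j = 0"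
  shows "sum f UNIV = f i1 + f i2 + f i3"
proof -
  have "sum f UNIV = sum f {i1,i2,i3}"
    by (rule sum.mono_neutral_left[symmetric]) (use assms in auto)
  also have "\<dots> = f i1 + f i2 + f i3" using assms by (simp add: add.assoc)
  finally show ?thesis .
qed

lemma lin:
  fixes g :: "'n::finite \<Rightarrow> complex"
  shows "(\<Sum>i\<in>UNIV. (x i + (\<Sum>k<m. t k * z k i)) * g i) =
     (\<Sum>i\<in>UNIV. x i * g i) + (\<Sum>k<m. t k * (\<Sum>i\<in>UNIV. z k i * g i))"
  by (simp add: distrib_right sum.distrib sum_distrib_right sum_distrib_left sum.swap[of _ UNIV] mult.assoc)

lemma cscaleM_sum: "(\<Sum>k\<in>K. cscaleM (f k) M) = cscaleM (sum f K) M"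
  by (simp add: vec_eq_iff sum_distrib_right)

lemma cscaleM_assoc: "cscaleM x (cscaleM y M) = cscaleM (x*y) M"
  by (simp add: vec_eq_iff mult.assoc)


theorem lemma10:
  fixes L :: "'n::finite \<Rightarrow> (complex^2) set" and a :: "'n \<Rightarrow> complex"
  assumes "CARD('n) \<ge> 3"
    and "\<And>i. complex_line (L i)"
    and "inj L"
    and "\<And>i. a i \<noteq> 0"
  shows "complex_affine_space_dim
           {A. standard_connection L A \<and> (\<forall>i. trace (A i) = a i)} (CARD('n) - 3)"
proof -
  have "\<forall>i. \<exists>w. w \<noteq> 0 \<and> L i = {c *s w | c. True}"
    using assms(2) unfolding complex_line_def by blast
  then obtain v where v: "\<And>i. v i \<noteq> 0" "\<And>i. L i = {c *s v i | c. True}" by metis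
  have vnz: "v i $ 1 \<noteq> 0 \<or> v i $ 2 \<noteq> 0" for i using v(1)[of i] by (auto simp: vec2_eq)
  have d: "v i $ 1 * v j $ 2 - v j $ 1 * v i $ 2 \<noteq> 0" if ij: "i \<noteq> j" for i j
  proof
    assume "v i $ 1 * v j $ 2 - v j $ 1 * v i $ 2 = 0"
    then have "v i $ 1 * v j $ 2 - v i $ 2 * v j $ 1 = 0" by (simp add: mult.commute)
    then obtain c where c: "v j = c *s v i" using prop2[OF v(1)[of i]] by blast
    have c0: "c \<noteq> 0" using v(1)[of j] c by auto
    have "L j = L i"
    proof -
      have "(\<exists>e. x = e *s (c *s v i)) \<longleftrightarrow> (\<exists>e. x = e *s v i)" for x
      proof
        assume "\<exists>e. x = e *s (c *s v i)"
        then show "\<exists>e. x = e *s v i" by (auto simp: vector_smult_assoc)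
      next
        assume "\<exists>e. x = e *s v i"
        then obtain e where "x = e *s v i" by blast
        then have "x = (e/c) *s (c *s v i)" using c0 by (simp add: vector_smult_assoc)
        then show "\<exists>e. x = e *s (c *s v i)" by blast
      qed
      then have "{x. \<exists>e. x = e *s (c *s v i)} = {x. \<exists>e. x = e *s v i}" by blast
      then show ?thesis by (simp add: v(2) c)
    qed
    then show False using assms(3) ij by (auto dest: injD)
  qed
  have "\<forall>i. \<exists>W. W *v v i = 0 \<and> trace W = 1" using exW v(1) by blast
  then obtain W where W: "\<And>i. W i *v v i = 0" "\<And>i. trace (W i) = 1" by metis
  define N where "N i = Nm (v i)" for i
  define g1 where "g1 i = v i $ 1 * v i $ 2" for i
  define g2 where "g2 i = v i $ 1 * v i $ 1" for i
  define g3 where "g3 i = v i $ 2 * v i $ 2" for i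
  define F :: "('n \<Rightarrow> complex) \<Rightarrow> ('n \<Rightarrow> complex) \<Rightarrow> complex"
    where "F g s = (\<Sum>i\<in>UNIV. s i * g i)" for g s
  define G where "G = (\<Sum>i\<in>UNIV. cscaleM (a i) (W i))"
  define \<sigma> where "\<sigma> = (\<Sum>i\<in>UNIV. a i) / 2"
  define y1 where "y1 = \<sigma> - G$1$1"
  define y2 where "y2 = G$1$2"
  define y3 where "y3 = - G$2$1"
  define f where "f s = (\<lambda>i. cscaleM (a i) (W i) + cscaleM (s i) (N i))" for s
  have GT: "G$1$1 + G$2$2 = (\<Sum>i\<in>UNIV. a i)"
  proof -
    have "G$1$1 + G$2$2 = (\<Sum>i\<in>UNIV. a i * (W i $1$1 + W i $2$2))"
      by (simp add: G_def sum.distrib distrib_left)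
    also have "\<dots> = (\<Sum>i\<in>UNIV. a i)" using W(2) by (simp add: tr2)
    finally show ?thesis .
  qed
  have sumcond: "(\<exists>c. (\<Sum>i\<in>UNIV. f s i) = mat c) \<longleftrightarrow> (F g1 s = y1 \<and> F g2 s = y2 \<and> F g3 s = y3)" for s
  proof -
    let ?M = "\<Sum>i\<in>UNIV. f s i"
    have M11: "?M$1$1 = G$1$1 + F g1 s"
      by (simp add: f_def G_def F_def sum.distrib N_def g1_def)
    have M12: "?M$1$2 = G$1$2 - F g2 s"
      by (simp add: f_def G_def F_def sum.distrib N_def g2_def sum_negf)
    have M21: "?M$2$1 = G$2$1 + F g3 s"
      by (simp add: f_def G_def F_def sum.distrib N_def g3_def)
    have M22: "?M$2$2 = G$2$2 - F g1 s"
      by (simp add: f_def G_def F_def sum.distrib N_def g1_def sum_negf mult.commute)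
    show ?thesis
    proof
      assume "\<exists>c. ?M = mat c"
      then obtain c where c: "?M = mat c" by blast
      have e: "G$1$1 + F g1 s = c" "G$1$2 - F g2 s = 0" "G$2$1 + F g3 s = 0" "G$2$2 - F g1 s = c"
        using M11 M12 M21 M22 by (simp_all add: c mat_nth)
      have "2 * c = (\<Sum>i\<in>UNIV. a i)" using e(1) e(4) GT by (simp add: algebra_simps)
      then have "c = \<sigma>" by (simp add: \<sigma>_def field_simps)
      then show "F g1 s = y1 \<and> F g2 s = y2 \<and> F g3 s = y3"
        using e by (simp add: y1_def y2_def y3_def algebra_simps eq_neg_iff_add_eq_0)
    next
      assume h: "F g1 s = y1 \<and> F g2 s = y2 \<and> F g3 s = y3"
      have ha: "F g1 s = \<sigma> - G$1$1" using h by (simp add: y1_def)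
      have hb: "G$1$1 + G$2$2 = 2 * \<sigma>" using GT by (simp add: \<sigma>_def)
      have "G$2$2 - F g1 s = (G$1$1 + G$2$2) - \<sigma>" using ha by (simp add: algebra_simps)
      also have "\<dots> = \<sigma>" using hb by simp
      finally have "G$2$2 - F g1 s = \<sigma>" .
      then have "?M = mat \<sigma>" using M11 M12 M21 M22 h
        by (simp add: mat2_eq mat_nth y1_def y2_def y3_def)
      then show "\<exists>c. ?M = mat c" by blast
    qed
  qed
  have S_eq: "{A. standard_connection L A \<and> (\<forall>i. trace (A i) = a i)} =
     {A. \<exists>s. A = f s \<and> F g1 s = y1 \<and> F g2 s = y2 \<and> F g3 s = y3}"
  proof -
    have "standard_connection L A \<and> (\<forall>i. trace (A i) = a i) \<longleftrightarrow>
          (\<forall>i. A i *v v i = 0 \<and> trace (A i) = a i) \<and> (\<exists>c. (\<Sum>i\<in>UNIV. A i) = mat c)" for A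
    proof -
      have "(A i \<noteq> 0 \<and> {x. A i *v x = 0} = L i) \<and> trace (A i) = a i \<longleftrightarrow> A i *v v i = 0 \<and> trace (A i) = a i" for i
      proof (cases "trace (A i) = a i")
        case True
        then have "A i \<noteq> 0" using assms(4)[of i] by (auto simp: tr2)
        then show ?thesis using True kernel_iff[OF v(1) _ v(2), of "A i"] assms(4)[of i] by auto
      qed simp
      then show ?thesis unfolding standard_connection_def by blast
    qed
    moreover have "(\<forall>i. A i *v v i = 0 \<and> trace (A i) = a i) \<longleftrightarrow> (\<exists>s. A = f s)" for A
    proof -
      have "(\<forall>i. A i *v v i = 0 \<and> trace (A i) = a i) \<longleftrightarrow> (\<forall>i. \<exists>s. A i = cscaleM (a i) (W i) + cscaleM s (N i))"
        using param1[OF v(1) W(1) W(2)] by (simp add: N_def)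
      also have "\<dots> \<longleftrightarrow> (\<exists>s. A = f s)"
      proof
        assume "\<forall>i. \<exists>s. A i = cscaleM (a i) (W i) + cscaleM s (N i)"
        from choice[OF this] obtain s where "\<forall>i. A i = cscaleM (a i) (W i) + cscaleM (s i) (N i)" by blast
        then have "A = f s" by (simp add: f_def fun_eq_iff)
        then show "\<exists>s. A = f s" by blast
      next
        assume "\<exists>s. A = f s"
        then show "\<forall>i. \<exists>s. A i = cscaleM (a i) (W i) + cscaleM s (N i)" by (auto simp: f_def)
      qed
      finally show ?thesis .
    qed
    ultimately have "A \<in> {A. standard_connection L A \<and> (\<forall>i. trace (A i) = a i)} \<longleftrightarrow>
       (\<exists>s. A = f s \<and> (\<exists>c. (\<Sum>i\<in>UNIV. f s i) = mat c))" for A by auto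
    then have "A \<in> {A. standard_connection L A \<and> (\<forall>i. trace (A i) = a i)} \<longleftrightarrow>
       (\<exists>s. A = f s \<and> F g1 s = y1 \<and> F g2 s = y2 \<and> F g3 s = y3)" for A by (simp only: sumcond)
    then show ?thesis by blast
  qed
  obtain I :: "'n set" where I: "I \<subseteq> UNIV" "card I = 3"
    using obtain_subset_with_card_n[of 3 "UNIV :: 'n set"] assms(1) by auto
  then obtain i1 i2 i3 where I3: "I = {i1,i2,i3}" "i1 \<noteq> i2" "i2 \<noteq> i3" "i1 \<noteq> i3"
    by (auto simp: card_3_iff)
  have Fsupp: "F g c = c i1 * g i1 + c i2 * g i2 + c i3 * g i3" if "\<And>j. j \<notin> I \<Longrightarrow> c j = 0" for g c
    unfolding F_def by (rule sum3) (use I3 that in auto)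
  have K1: "\<exists>c. (\<forall>j. j \<notin> I \<longrightarrow> c j = 0) \<and> F g1 c = z1 \<and> F g2 c = z2 \<and> F g3 c = z3" for z1 z2 z3
  proof -
    obtain x1 x2 x3 where x:
      "x1*(v i1$1 * v i1$2) + x2*(v i2$1 * v i2$2) + x3*(v i3$1 * v i3$2) = z1"
      "x1*(v i1$1 * v i1$1) + x2*(v i2$1 * v i2$1) + x3*(v i3$1 * v i3$1) = z2"
      "x1*(v i1$2 * v i1$2) + x2*(v i2$2 * v i2$2) + x3*(v i3$2 * v i3$2) = z3"
      using solve3[OF d[of i1 i2] d[of i1 i3] d[of i2 i3]] I3 by blast
    define c where "c j = (if j = i1 then x1 else if j = i2 then x2 else if j = i3 then x3 else 0)" for j
    have cs: "\<And>j. j \<notin> I \<Longrightarrow> c j = 0" using I3 by (auto simp: c_def)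
    have Fc: "F g c = x1 * g i1 + x2 * g i2 + x3 * g i3" for g
      using Fsupp[of c g, OF cs] I3 by (simp add: c_def)
    show ?thesis
      apply (rule exI[of _ c])
      using cs Fc x by (simp add: g1_def g2_def g3_def)
  qed
  have K2: "c j = 0" if "\<And>j. j \<notin> I \<Longrightarrow> c j = 0" "F g1 c = 0" "F g2 c = 0" "F g3 c = 0" for c j
  proof -
    have "c i1 = 0 \<and> c i2 = 0 \<and> c i3 = 0"
      apply (rule solve3_uniq[OF d[of i1 i2] d[of i1 i3] d[of i2 i3]])
      using I3 that Fsupp[OF that(1)] by (simp_all add: g1_def g2_def g3_def)
    then show ?thesis using that(1) I3 by (cases "j = i1 \<or> j = i2 \<or> j = i3") auto
  qed
  obtain s0 where s0: "\<And>j. j \<notin> I \<Longrightarrow> s0 j = 0" "F g1 s0 = y1" "F g2 s0 = y2" "F g3 s0 = y3"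
    using K1 by blast
  have "\<forall>j. \<exists>c. (\<forall>j. j \<notin> I \<longrightarrow> c j = 0) \<and> F g1 c = g1 j \<and> F g2 c = g2 j \<and> F g3 c = g3 j"
    using K1 by blast
  then obtain \<beta> where \<beta>: "\<And>j k. k \<notin> I \<Longrightarrow> \<beta> j k = 0" "\<And>j. F g1 (\<beta> j) = g1 j"
     "\<And>j. F g2 (\<beta> j) = g2 j" "\<And>j. F g3 (\<beta> j) = g3 j"
    by metis
  define b where "b j i = (if i = j then 1 else 0) - \<beta> j i" for j i
  have Fb0: "F g (b j) = g j - F g (\<beta> j)" for g j
    by (simp add: F_def b_def left_diff_distrib sum_subtractf if_distrib[of "\<lambda>x. x * _"] cong: if_cong)
  have Fb: "F g1 (b j) = 0" "F g2 (b j) = 0" "F g3 (b j) = 0" for j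
    using Fb0 \<beta> by simp_all
  define m where "m = CARD('n) - 3"
  have cardD: "card (UNIV - I) = m"
    using I by (simp add: card_Diff_subset m_def)
  obtain h where h: "bij_betw h {..<m} (UNIV - I)"
    using ex_bij_betw_nat_finite[of "UNIV - I"] cardD by (auto simp: atLeast0LessThan)
  have hI: "k < m \<Longrightarrow> h k \<notin> I" for k using h by (auto simp: bij_betw_def)
  have hinj: "k < m \<Longrightarrow> k0 < m \<Longrightarrow> h k = h k0 \<longleftrightarrow> k = k0" for k k0
    using h by (auto simp: bij_betw_def inj_on_def)
  have hsurj: "j \<notin> I \<Longrightarrow> \<exists>k0<m. j = h k0" for j
    using h by (auto simp: bij_betw_def)
  have bdelta: "b (h k) (h k0) = (if k = k0 then 1 else 0)" if "k < m" "k0 < m" for k k0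
    using hinj[OF that] \<beta>(1)[OF hI[OF that(2)]] by (auto simp: b_def)
  define \<tau> where "\<tau> t i = (\<Sum>k<m. t k * b (h k) i)" for t i
  have tau_at: "\<tau> t (h k0) = t k0" if "k0 < m" for t k0
  proof -
    have "\<tau> t (h k0) = (\<Sum>k<m. if k = k0 then t k else 0)"
      unfolding \<tau>_def by (rule sum.cong) (use bdelta that in auto)
    also have "\<dots> = t k0" using that by simp
    finally show ?thesis .
  qed
  have Flin: "F g (\<lambda>i. s0 i + \<tau> t i) = F g s0 + (\<Sum>k<m. t k * F g (b (h k)))" for g t
    unfolding F_def \<tau>_def by (rule lin)
  have C: "(F g1 s = y1 \<and> F g2 s = y2 \<and> F g3 s = y3) \<longleftrightarrow> (\<exists>t. s = (\<lambda>i. s0 i + \<tau> t i))" for s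
  proof
    assume Fs: "F g1 s = y1 \<and> F g2 s = y2 \<and> F g3 s = y3"
    define t where "t k = s (h k)" for k
    define dd where "dd i = s i - (s0 i + \<tau> t i)" for i
    have Fd: "F g dd = F g s - F g (\<lambda>i. s0 i + \<tau> t i)" for g
      by (simp add: F_def dd_def left_diff_distrib sum_subtractf)
    have "F g1 dd = 0" "F g2 dd = 0" "F g3 dd = 0"
      using Fd Flin Fb Fs s0 by simp_all
    moreover have "dd j = 0" if jI: "j \<notin> I" for j
    proof -
      obtain k0 where "k0 < m" "j = h k0" using hsurj[OF jI] by blast
      then show ?thesis using tau_at s0(1)[OF jI] by (simp add: dd_def t_def)
    qed
    ultimately have "dd j = 0" for j using K2 by blast
    then show "\<exists>t. s = (\<lambda>i. s0 i + \<tau> t i)" by (intro exI[of _ t]) (auto simp: dd_def fun_eq_iff)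
  next
    assume "\<exists>t. s = (\<lambda>i. s0 i + \<tau> t i)"
    then obtain t where "s = (\<lambda>i. s0 i + \<tau> t i)" by blast
    then show "F g1 s = y1 \<and> F g2 s = y2 \<and> F g3 s = y3"
      using Flin Fb s0 by simp
  qed
  define P where "P i = cscaleM (a i) (W i) + cscaleM (s0 i) (N i)" for i
  define B where "B k i = cscaleM (b (h k) i) (N i)" for k i
  have Bsum: "(\<Sum>k<m. cscaleM (t k) (B k i)) = cscaleM (\<tau> t i) (N i)" for t i
    by (simp add: B_def cscaleM_assoc cscaleM_sum \<tau>_def)
  have indep: "\<forall>k<m. t k = 0" if "\<forall>i. (\<Sum>k<m. cscaleM (t k) (B k i)) = 0" for t
  proof (intro allI impI)
    fix k0 assume k0: "k0 < m"
    have "cscaleM (t k0) (N (h k0)) = 0" using that[rule_format, of "h k0"] Bsum tau_at[OF k0] by simp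
    then have "t k0 * (v (h k0) $1 * v (h k0) $1) = 0" "t k0 * (v (h k0) $2 * v (h k0) $2) = 0"
      by (simp_all add: mat2_eq N_def)
    then show "t k0 = 0" using vnz[of "h k0"] by auto
  qed
  have set_eq: "{A. \<exists>s. A = f s \<and> F g1 s = y1 \<and> F g2 s = y2 \<and> F g3 s = y3} =
     {(\<lambda>i. P i + (\<Sum>k<m. cscaleM (t k) (B k i))) | t. True}"
  proof -
    have fe: "(\<lambda>i. P i + (\<Sum>k<m. cscaleM (t k) (B k i))) = f (\<lambda>i. s0 i + \<tau> t i)" for t
      by (simp add: Bsum P_def f_def fun_eq_iff vec_eq_iff algebra_simps)
    show ?thesis unfolding fe using C by auto
  qed
  show ?thesis
    unfolding complex_affine_space_dim_def S_eq set_eq m_def[symmetric]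
    apply (rule exI[of _ P], rule exI[of _ B])
    using indep by simp
qed

end
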